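(* Let $P\in\mathcal{N}_2$ via the pair of chain covers $\{\mathcal{C}_1,\mathcal{C}_2\}$, and let $\bm{c}\subseteq P$ be a convex subposet of $P$ which is a chain. Then there is a chain in $\mathcal{C}_1$ or a chain in $\mathcal{C}_2$ that contains all of $\bm{c}$.
   Context: All posets are finite. An edge of a poset is a covering relation $x \lessdot y$. A chain cover of a poset $P$ is a set of pairwise disjoint saturated chains whose union is $P$. A labeling of $P$ is a map $\lambda:P\to\mathbb{R}$. For a chain cover $\mathcal{C}$, $\mathcal{C}$-sorting a labeling means: for each chain $\bm{c}\in\mathcal{C}$, permute the labels $\{\lambda(v): v\in \bm{c}\}$ among the elements of $\bm{c}$ so that they are non-decreasing from the minimum of $\bm{c}$ to its maximum. A finite poset $P$ is in $\mathcal{N}_2$ via $\{\mathcal{C}_1,\mathcal{C}_2\}$ if $\{\mathcal{C}_1,\mathcal{C}_2\}$ is an unordered pair of chain covers of $P$ such that (1) for every labeling of $P$ and for $i=1$ and $i=2$, first $\mathcal{C}_i$-sorting and then $\mathcal{C}_{3-i}$-sorting leaves the labels non-decreasing along every chain of $\mathcal{C}_i$; and (2) every edge of $P$ is contained in some chain of $\mathcal{C}_1$ or of $\mathcal{C}_2$. A subset $S$ is convex if $x\le z\le y$ with $x,y\in S$ implies $z\in S$. *)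

theory Defs
  imports Main "HOL.Real"
begin

definition finite_poset :: "'a set \<Rightarrow> ('a \<Rightarrow> 'a \<Rightarrow> bool) \<Rightarrow> bool" where
  "finite_poset P le \<longleftrightarrow> finite P
     \<and> (\<forall>x\<in>P. le x x)
     \<and> (\<forall>x\<in>P. \<forall>y\<in>P. le x y \<and> le y x \<longrightarrow> x = y)
     \<and> (\<forall>x\<in>P. \<forall>y\<in>P. \<forall>z\<in>P. le x y \<and> le y z \<longrightarrow> le x z)"

definition covers :: "'a set \<Rightarrow> ('a \<Rightarrow> 'a \<Rightarrow> bool) \<Rightarrow> 'a \<Rightarrow> 'a \<Rightarrow> bool" where
  "covers P le x y \<longleftrightarrow> x \<in> P \<and> y \<in> P \<and> le x y \<and> x \<noteq> y
     \<and> \<not> (\<exists>z\<in>P. le x z \<and> le z y \<and> z \<noteq> x \<and> z \<noteq> y)"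

definition is_chain :: "'a set \<Rightarrow> ('a \<Rightarrow> 'a \<Rightarrow> bool) \<Rightarrow> 'a set \<Rightarrow> bool" where
  "is_chain P le c \<longleftrightarrow> c \<subseteq> P \<and> (\<forall>x\<in>c. \<forall>y\<in>c. le x y \<or> le y x)"

definition saturated_chain :: "'a set \<Rightarrow> ('a \<Rightarrow> 'a \<Rightarrow> bool) \<Rightarrow> 'a set \<Rightarrow> bool" where
  "saturated_chain P le c \<longleftrightarrow> is_chain P le c \<and> c \<noteq> {}
     \<and> (\<forall>x\<in>c. \<forall>y\<in>c. le x y \<and> x \<noteq> y
           \<and> \<not> (\<exists>z\<in>c. le x z \<and> le z y \<and> z \<noteq> x \<and> z \<noteq> y)
           \<longrightarrow> covers P le x y)"

definition chain_cover :: "'a set \<Rightarrow> ('a \<Rightarrow> 'a \<Rightarrow> bool) \<Rightarrow> 'a set set \<Rightarrow> bool" where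
  "chain_cover P le C \<longleftrightarrow> (\<forall>c\<in>C. saturated_chain P le c) \<and> pairwise disjnt C \<and> \<Union>C = P"

text \<open>mu is the result of C-sorting the labeling lam: on each chain of C the labels of lam
  are permuted among the elements of the chain so as to become non-decreasing.\<close>
definition C_sort :: "('a \<Rightarrow> 'a \<Rightarrow> bool) \<Rightarrow> 'a set set \<Rightarrow> ('a \<Rightarrow> real) \<Rightarrow> ('a \<Rightarrow> real) \<Rightarrow> bool" where
  "C_sort le C lam mu \<longleftrightarrow> (\<forall>c\<in>C.
       (\<exists>\<sigma>. bij_betw \<sigma> c c \<and> (\<forall>x\<in>c. mu x = lam (\<sigma> x)))
     \<and> (\<forall>x\<in>c. \<forall>y\<in>c. le x y \<longrightarrow> mu x \<le> mu y))"

definition sorted_along :: "('a \<Rightarrow> 'a \<Rightarrow> bool) \<Rightarrow> 'a set set \<Rightarrow> ('a \<Rightarrow> real) \<Rightarrow> bool" where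
  "sorted_along le C mu \<longleftrightarrow> (\<forall>c\<in>C. \<forall>x\<in>c. \<forall>y\<in>c. le x y \<longrightarrow> mu x \<le> mu y)"

definition in_N2 :: "'a set \<Rightarrow> ('a \<Rightarrow> 'a \<Rightarrow> bool) \<Rightarrow> 'a set set \<Rightarrow> 'a set set \<Rightarrow> bool" where
  "in_N2 P le C1 C2 \<longleftrightarrow> finite_poset P le \<and> chain_cover P le C1 \<and> chain_cover P le C2
     \<and> (\<forall>lam mu nu. C_sort le C1 lam mu \<and> C_sort le C2 mu nu \<longrightarrow> sorted_along le C1 nu)
     \<and> (\<forall>lam mu nu. C_sort le C2 lam mu \<and> C_sort le C1 mu nu \<longrightarrow> sorted_along le C2 nu)
     \<and> (\<forall>x y. covers P le x y \<longrightarrow> (\<exists>c\<in>C1 \<union> C2. x \<in> c \<and> y \<in> c))"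

definition convex :: "'a set \<Rightarrow> ('a \<Rightarrow> 'a \<Rightarrow> bool) \<Rightarrow> 'a set \<Rightarrow> bool" where
  "convex P le S \<longleftrightarrow> S \<subseteq> P \<and> (\<forall>x\<in>S. \<forall>y\<in>S. \<forall>z\<in>P. le x z \<and> le z y \<longrightarrow> z \<in> S)"

end

theory Submission
  imports Defs
begin

lemma keyK:
  fixes le :: "'a \<Rightarrow> 'a \<Rightarrow> bool"
  assumes fp: "finite_poset P le"
    and cci: "chain_cover P le Ci" and ccj: "chain_cover P le Cj"
    and hyp: "\<forall>lam mu nu. C_sort le Cj lam mu \<and> C_sort le Ci mu nu \<longrightarrow> sorted_along le Cj nu"
    and d: "d \<in> Ci" and e: "e \<in> Cj"
    and xd: "x \<in> d" and yd: "y \<in> d" and xy: "x \<noteq> y"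
    and ye: "y \<in> e" and me: "m \<in> e" and ym: "le y m" "y \<noteq> m"
    and xm: "le x m" and xe: "x \<notin> e" and md: "m \<notin> d"
    and H1: "\<forall>w\<in>d. le y w \<and> le w m \<longrightarrow> w = y \<or> w = m"
    and H2: "\<forall>v\<in>P. le x v \<and> le v m \<and> v \<noteq> x \<longrightarrow> v \<in> e"
  shows False
proof -
  have trans: "\<And>a b c. a \<in> P \<Longrightarrow> b \<in> P \<Longrightarrow> c \<in> P \<Longrightarrow> le a b \<Longrightarrow> le b c \<Longrightarrow> le a c"
    using fp unfolding finite_poset_def by blast
  have UCi: "\<Union>Ci = P" and UCj: "\<Union>Cj = P" using cci ccj unfolding chain_cover_def by auto
  have dji: "\<And>D D' v. D \<in> Ci \<Longrightarrow> D' \<in> Ci \<Longrightarrow> v \<in> D \<Longrightarrow> v \<in> D' \<Longrightarrow> D = D'"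
    using cci unfolding chain_cover_def pairwise_def disjnt_def by blast
  have djj: "\<And>D D' v. D \<in> Cj \<Longrightarrow> D' \<in> Cj \<Longrightarrow> v \<in> D \<Longrightarrow> v \<in> D' \<Longrightarrow> D = D'"
    using ccj unfolding chain_cover_def pairwise_def disjnt_def by blast
  have mP: "m \<in> P" using me e UCj by blast
  have xP: "x \<in> P" using xd d UCi by blast
  have yP: "y \<in> P" using yd d UCi by blast
  define h where "h v = (if le v m then 0 else (1::real))" for v
  define mu where "mu v = (if v = x then 1/2 else h v)" for v
  define nu where "nu v = (if v = y then 1/2 else h v)" for v
  define sg where "sg v = (if v = x then y else if v = y then x else v)" for v
  have hmono: "h u \<le> h v" if "u \<in> P" "v \<in> P" "le u v" for u v
    using trans[OF that(1,2) mP that(3)] unfolding h_def by auto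
  have c1: "C_sort le Cj mu mu"
    unfolding C_sort_def
  proof (rule ballI, rule conjI)
    fix D assume D: "D \<in> Cj"
    show "\<exists>\<sigma>. bij_betw \<sigma> D D \<and> (\<forall>x\<in>D. mu x = mu (\<sigma> x))"
      by (rule exI[of _ id]) auto
    show "\<forall>u\<in>D. \<forall>v\<in>D. le u v \<longrightarrow> mu u \<le> mu v"
    proof (intro ballI impI)
      fix u v assume u: "u \<in> D" and v: "v \<in> D" and uv: "le u v"
      have uP: "u \<in> P" and vP: "v \<in> P" using u v D UCj by blast+
      show "mu u \<le> mu v"
      proof (cases "u = x")
        case True
        show ?thesis
        proof (cases "v = x")
          case False
          have "\<not> le v m"
          proof
            assume "le v m"
            then have "v \<in> e" using H2 vP uv True False by blast
            then have "D = e" using djj[OF D e v] by blast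
            then show False using u True xe by blast
          qed
          then show ?thesis using True False unfolding mu_def h_def by auto
        qed (simp add: True)
      next
        case False
        show ?thesis
        proof (cases "v = x")
          case True
          have "le u m" using trans[OF uP xP mP] uv True xm by blast
          then show ?thesis using True False unfolding mu_def h_def by auto
        next
          case False2: False
          show ?thesis using hmono[OF uP vP uv] False False2 unfolding mu_def by auto
        qed
      qed
    qed
  qed
  have c2: "C_sort le Ci mu nu"
    unfolding C_sort_def
  proof (rule ballI, rule conjI)
    fix D assume D: "D \<in> Ci"
    show "\<exists>\<sigma>. bij_betw \<sigma> D D \<and> (\<forall>x\<in>D. nu x = mu (\<sigma> x))"
    proof (cases "D = d")
      case True
      have "inj_on sg D" unfolding sg_def inj_on_def by auto
      moreover have "sg ` D = D"
      proof
        show "sg ` D \<subseteq> D" using True xd yd unfolding sg_def by auto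
        show "D \<subseteq> sg ` D"
        proof
          fix v assume "v \<in> D"
          then have "sg (sg v) = v" "sg v \<in> D" using True xd yd xy unfolding sg_def by auto
          then show "v \<in> sg ` D" by (metis image_eqI)
        qed
      qed
      ultimately have "bij_betw sg D D" by (simp add: bij_betw_def)
      moreover have "\<forall>v\<in>D. nu v = mu (sg v)"
        using xy xm ym trans[OF yP mP mP] unfolding nu_def mu_def sg_def h_def by auto
      ultimately show ?thesis by blast
    next
      case False
      have "x \<notin> D" "y \<notin> D" using dji[OF D d] xd yd False by blast+
      then have "\<forall>v\<in>D. nu v = mu (id v)" unfolding nu_def mu_def by auto
      then show ?thesis by (intro exI[of _ id]) auto
    qed
    show "\<forall>u\<in>D. \<forall>v\<in>D. le u v \<longrightarrow> nu u \<le> nu v"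
    proof (intro ballI impI)
      fix u v assume u: "u \<in> D" and v: "v \<in> D" and uv: "le u v"
      have uP: "u \<in> P" and vP: "v \<in> P" using u v D UCi by blast+
      show "nu u \<le> nu v"
      proof (cases "u = y")
        case True
        show ?thesis
        proof (cases "v = y")
          case False
          have Dd: "D = d" using dji[OF D d u] True yd by blast
          have "\<not> le v m"
          proof
            assume "le v m"
            then have "v = y \<or> v = m" using H1 v Dd uv True by blast
            then show False using False md v Dd by blast
          qed
          then show ?thesis using True False unfolding nu_def h_def by auto
        qed (simp add: True)
      next
        case False
        show ?thesis
        proof (cases "v = y")
          case True
          have "le u m" using trans[OF uP yP mP] uv True ym by blast
          then show ?thesis using True False unfolding nu_def h_def by auto
        next
          case False2: False
          show ?thesis using hmono[OF uP vP uv] False False2 unfolding nu_def by auto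
        qed
      qed
    qed
  qed
  have "sorted_along le Cj nu" using hyp c1 c2 by blast
  then have "nu y \<le> nu m" using e ye me ym unfolding sorted_along_def by blast
  moreover have "le m m" using fp mP unfolding finite_poset_def by blast
  ultimately show False using ym unfolding nu_def h_def by auto
qed

lemma chain_max:
  assumes fp: "finite_poset P le" and fin: "finite S" and ne: "S \<noteq> {}"
    and ch: "is_chain P le S"
  shows "\<exists>m\<in>S. \<forall>s\<in>S. le s m"
  using fin ne ch
proof (induction S rule: finite_ne_induct)
  case (singleton a)
  then show ?case using fp unfolding finite_poset_def is_chain_def by auto
next
  case (insert a F)
  have chF: "is_chain P le F" using insert.prems unfolding is_chain_def by auto
  obtain m where m: "m \<in> F" "\<forall>s\<in>F. le s m" using insert.IH[OF chF] by blast
  have aP: "a \<in> P" and FP: "F \<subseteq> P" using insert.prems unfolding is_chain_def by auto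
  have trans: "\<And>a b c. a \<in> P \<Longrightarrow> b \<in> P \<Longrightarrow> c \<in> P \<Longrightarrow> le a b \<Longrightarrow> le b c \<Longrightarrow> le a c"
    using fp unfolding finite_poset_def by blast
  have cmp: "le a m \<or> le m a" using insert.prems m(1) unfolding is_chain_def by auto
  show ?case
  proof (cases "le m a")
    case True
    have "\<forall>s\<in>insert a F. le s a"
      using True m FP aP trans fp unfolding finite_poset_def by blast
    then show ?thesis by blast
  next
    case False
    then have "le a m" using cmp by blast
    then have "\<forall>s\<in>insert a F. le s m" using m by blast
    then show ?thesis using m(1) by blast
  qed
qed

lemma mainlem:
  assumes A: "in_N2 P le C1 C2"
  shows "convex P le c \<Longrightarrow> is_chain P le c \<Longrightarrow> c \<noteq> {} \<Longrightarrow> (\<exists>d \<in> C1 \<union> C2. c \<subseteq> d)"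
proof (induction "card c" arbitrary: c rule: less_induct)
  case less
  have A': "finite_poset P le \<and> chain_cover P le C1 \<and> chain_cover P le C2
    \<and> (\<forall>lam mu nu. C_sort le C1 lam mu \<and> C_sort le C2 mu nu \<longrightarrow> sorted_along le C1 nu)
    \<and> (\<forall>lam mu nu. C_sort le C2 lam mu \<and> C_sort le C1 mu nu \<longrightarrow> sorted_along le C2 nu)
    \<and> (\<forall>x y. covers P le x y \<longrightarrow> (\<exists>c\<in>C1 \<union> C2. x \<in> c \<and> y \<in> c))"
    using A unfolding in_N2_def .
  note N = A'[THEN conjunct1] A'[THEN conjunct2, THEN conjunct1]
    A'[THEN conjunct2, THEN conjunct2, THEN conjunct1]
    A'[THEN conjunct2, THEN conjunct2, THEN conjunct2, THEN conjunct1]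
    A'[THEN conjunct2, THEN conjunct2, THEN conjunct2, THEN conjunct2, THEN conjunct1]
    A'[THEN conjunct2, THEN conjunct2, THEN conjunct2, THEN conjunct2, THEN conjunct2]
  note fp = N(1)
  have finP: "finite P" using fp unfolding finite_poset_def by blast
  have antis: "\<And>a b. a \<in> P \<Longrightarrow> b \<in> P \<Longrightarrow> le a b \<Longrightarrow> le b a \<Longrightarrow> a = b"
    using fp unfolding finite_poset_def by blast
  have U1: "\<Union>C1 = P" using N(2) unfolding chain_cover_def by blast
  have U2: "\<Union>C2 = P" using N(3) unfolding chain_cover_def by blast
  have dj1: "\<And>D D' v. D \<in> C1 \<Longrightarrow> D' \<in> C1 \<Longrightarrow> v \<in> D \<Longrightarrow> v \<in> D' \<Longrightarrow> D = D'"
    using N(2) unfolding chain_cover_def pairwise_def disjnt_def by blast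
  have dj2: "\<And>D D' v. D \<in> C2 \<Longrightarrow> D' \<in> C2 \<Longrightarrow> v \<in> D \<Longrightarrow> v \<in> D' \<Longrightarrow> D = D'"
    using N(3) unfolding chain_cover_def pairwise_def disjnt_def by blast
  have cP: "c \<subseteq> P" using less.prems unfolding is_chain_def by blast
  have finc: "finite c" using cP finP finite_subset by blast
  have cvx: "\<And>a b z. a \<in> c \<Longrightarrow> b \<in> c \<Longrightarrow> z \<in> P \<Longrightarrow> le a z \<Longrightarrow> le z b \<Longrightarrow> z \<in> c"
    using less.prems(1) unfolding convex_def by blast
  obtain m where m: "m \<in> c" "\<forall>s\<in>c. le s m" using chain_max[OF fp finc less.prems(3,2)] by blast
  show ?case
  proof (cases "c = {m}")
    case True
    have "m \<in> \<Union>C1" using U1 m(1) cP by (simp add: subset_iff)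
    then obtain d where "d \<in> C1" "m \<in> d" by (rule UnionE)
    then show ?thesis using True by blast
  next
    case False
    define c' where "c' = c - {m}"
    have c'ne: "c' \<noteq> {}" using False m(1) c'_def by blast
    have c'lt: "card c' < card c" unfolding c'_def by (rule card_Diff1_less[OF finc m(1)])
    have c'cv: "convex P le c'" unfolding convex_def c'_def
    proof (intro conjI ballI impI)
      show "c - {m} \<subseteq> P" using cP by blast
      fix a b z assume a: "a \<in> c - {m}" and b: "b \<in> c - {m}" and z: "z \<in> P" and lz: "le a z \<and> le z b"
      have "z \<in> c" using cvx a b z lz by blast
      moreover have "z \<noteq> m"
      proof
        assume "z = m"
        then have "le m b" "le b m" using lz m b by auto
        then show False using antis b cP m by blast
      qed
      ultimately show "z \<in> c - {m}" by blast
    qed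
    have c'ch: "is_chain P le c'" using less.prems(2) unfolding is_chain_def c'_def by blast
    obtain d where d: "d \<in> C1 \<union> C2" "c' \<subseteq> d" using less.hyps[OF c'lt c'cv c'ch c'ne] by blast
    obtain y where y: "y \<in> c'" "\<forall>s\<in>c'. le s y"
      using chain_max[OF fp _ c'ne c'ch] finc c'_def by blast
    have yc: "y \<in> c" "y \<noteq> m" using y c'_def by auto
    have ym: "le y m" using m yc by blast
    have yP: "y \<in> P" "m \<in> P" using yc m cP by auto
    have cov: "covers P le y m" unfolding covers_def
    proof (intro conjI)
      show "\<not> (\<exists>z\<in>P. le y z \<and> le z m \<and> z \<noteq> y \<and> z \<noteq> m)"
      proof
        assume "\<exists>z\<in>P. le y z \<and> le z m \<and> z \<noteq> y \<and> z \<noteq> m"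
        then obtain z where z: "z \<in> P" "le y z" "le z m" "z \<noteq> y" "z \<noteq> m" by blast
        have "z \<in> c'" using cvx[OF yc(1) m(1) z(1-3)] z(5) c'_def by blast
        then have "le z y" using y by blast
        then show False using antis z yP by blast
      qed
    qed (use yP ym yc in auto)
    obtain e where e: "e \<in> C1 \<union> C2" "y \<in> e" "m \<in> e" using N(6) cov by blast
    have cc: "c = insert m c'" using m c'_def by blast
    show ?thesis
    proof (cases "m \<in> d")
      case True
      then show ?thesis using d cc by blast
    next
      case md: False
      show ?thesis
      proof (cases "c \<subseteq> e")
        case True
        then show ?thesis using e by blast
      next
        case False
        have ch2: "is_chain P le (c - e)" using less.prems(2) unfolding is_chain_def by blast
        obtain x where x: "x \<in> c - e" "\<forall>s\<in>c-e. le s x"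
          using chain_max[OF fp _ _ ch2] finc False by blast
        have xd: "x \<in> d" using x e(3) d c'_def by blast
        have yd: "y \<in> d" using y d by blast
        have xy: "x \<noteq> y" using x e by blast
        have xm: "le x m" using x m by blast
        have xe: "x \<notin> e" using x by blast
        have H1: "\<forall>w\<in>d. le y w \<and> le w m \<longrightarrow> w = y \<or> w = m"
        proof (intro ballI impI)
          fix w assume w: "w \<in> d" "le y w \<and> le w m"
          have "d \<subseteq> P" using d(1) Union_upper[of d C1] Union_upper[of d C2] U1 U2 by auto
          then have wP: "w \<in> P" using w by (simp add: subset_iff)
          have "w \<in> c" using cvx[OF yc(1) m(1) wP] w by blast
          show "w = y \<or> w = m"
          proof (cases "w = m")
            case False
            then have "le w y" using y \<open>w \<in> c\<close> c'_def by blast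
            then show ?thesis using antis wP yP w by blast
          qed simp
        qed
        have H2: "\<forall>v\<in>P. le x v \<and> le v m \<and> v \<noteq> x \<longrightarrow> v \<in> e"
        proof (intro ballI impI)
          fix v assume v: "v \<in> P" "le x v \<and> le v m \<and> v \<noteq> x"
          have xP: "x \<in> P" using x cP by blast
          have "v \<in> c" using cvx[OF _ m(1) v(1)] x v by blast
          show "v \<in> e"
          proof (rule ccontr)
            assume "v \<notin> e"
            then have "le v x" using x \<open>v \<in> c\<close> by blast
            then show False using antis v xP by blast
          qed
        qed
        have False
        proof (cases "d \<in> C1")
          case dC1: True
          show False
          proof (cases "e \<in> C1")
            case True
            then have "d = e" using dj1 dC1 yd e by blast
            then show False using md e by blast
          next
            case False
            then have eC2: "e \<in> C2" using e by blast
            show False using keyK[OF N(1,2,3,5) dC1 eC2 xd yd xy e(2,3) ym yc(2) xm xe md H1 H2] .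
          qed
        next
          case False
          then have dC2: "d \<in> C2" using d by blast
          show False
          proof (cases "e \<in> C2")
            case True
            then have "d = e" using dj2 dC2 yd e by blast
            then show False using md e by blast
          next
            case False
            then have eC1: "e \<in> C1" using e by blast
            show False using keyK[OF N(1,3,2,4) dC2 eC1 xd yd xy e(2,3) ym yc(2) xm xe md H1 H2] .
          qed
        qed
        then show ?thesis ..
      qed
    qed
  qed
qed

theorem lemma2p2:
  fixes P :: "'a set" and le :: "'a \<Rightarrow> 'a \<Rightarrow> bool"
    and C1 C2 :: "'a set set" and c :: "'a set"
  assumes "in_N2 P le C1 C2"
    and "convex P le c"
    and "is_chain P le c"
    and "c \<noteq> {}"
  shows "\<exists>d \<in> C1 \<union> C2. c \<subseteq> d"
  using mainlem[OF assms(1) assms(2-4)] .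

end
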